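(* Let $(\rho_0,p_0)$ solve the TOV system on $[0,R)$ with regular centre and mass function $m_0$. Suppose $r_s\in(0,R)$ satisfies $p_0(r_s)=0$, and set $M=m_0(r_s)>0$, with $\rho_0(r_s)>0$. For $\delta p_c$ near $0$, let $p_{\delta p_c}=p_0+\delta p$ be the deformed pressure of Theorem P1, and let $r_s(\delta p_c)$ be the zero of $p_{\delta p_c}$ near $r_s$ (with $r_s(0)=r_s$). Then $$\left.\frac{d r_s}{d\,\delta p_c}\right|_{0}=\frac{r_s^2\,(1-2M/r_s)^{3/2}\,e^{-2I_0(r_s)}}{\rho_0(r_s)\,M}>0,\qquad I_0(r)=\int_0^r g_0(s)\,ds,$$ and the compactness $\chi(\delta p_c)=2m_0(r_s(\delta p_c))/r_s(\delta p_c)$ satisfies $$\left.\frac{d\chi}{d\,\delta p_c}\right|_{0}=\frac{8\pi}{3}\,\bigl\{3\rho_0(r_s)-\bar\rho_0(r_s)\bigr\}\,r_s\,\left.\frac{d r_s}{d\,\delta p_c}\right|_{0},\qquad \bar\rho_0(r_s)=\frac{M}{\tfrac{4\pi}{3}r_s^3}.$$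
   Context: Units $G=c=1$. Mass function $m(r)=4\pi\int_0^r\rho(s)s^2ds$. $(\rho,p)$ "solves the TOV system on $[0,R)$" if $1-2m/r>0$ on $(0,R)$, $p\in C^1$, and $\frac{dp}{dr}=-\frac{[\rho+p][m+4\pi pr^3]}{r^2[1-2m/r]}$; "regular centre" means $\rho,p$ extend continuously to $r=0$. $g_0(r)=\frac{m_0+4\pi p_0r^3}{r^2[1-2m_0/r]}$. Theorem P1 deformation: with $D(r)=1+4\pi\delta p_c\int_0^r \frac{s e^{-2I_0(s)}}{\sqrt{1-2m_0(s)/s}}ds$, $\delta p(r)=\delta p_c\sqrt{1-2m_0(r)/r}\,e^{-2I_0(r)}/D(r)$; the density (and $m_0$) is unchanged. *)

theory Defs
  imports "HOL-Analysis.Analysis"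
begin

definition mass :: "(real \<Rightarrow> real) \<Rightarrow> real \<Rightarrow> real" where
  "mass \<rho> r = 4 * pi * integral {0..r} (\<lambda>s. \<rho> s * s^2)"

definition tov_rhs :: "(real \<Rightarrow> real) \<Rightarrow> (real \<Rightarrow> real) \<Rightarrow> real \<Rightarrow> real" where
  "tov_rhs \<rho> p r = - ((\<rho> r + p r) * (mass \<rho> r + 4 * pi * p r * r^3)) / (r^2 * (1 - 2 * mass \<rho> r / r))"

definition tov_solution :: "(real \<Rightarrow> real) \<Rightarrow> (real \<Rightarrow> real) \<Rightarrow> real \<Rightarrow> bool" where
  "tov_solution \<rho> p R \<longleftrightarrow>
     (\<forall>r\<in>{0<..<R}. 1 - 2 * mass \<rho> r / r > 0) \<and>
     p C1_differentiable_on {0<..<R} \<and>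
     (\<forall>r\<in>{0<..<R}. (p has_real_derivative tov_rhs \<rho> p r) (at r))"

definition regular_centre :: "(real \<Rightarrow> real) \<Rightarrow> (real \<Rightarrow> real) \<Rightarrow> bool" where
  "regular_centre \<rho> p \<longleftrightarrow> (\<exists>a b. (\<rho> \<longlongrightarrow> a) (at_right 0) \<and> (p \<longlongrightarrow> b) (at_right 0))"

definition g0 :: "(real \<Rightarrow> real) \<Rightarrow> (real \<Rightarrow> real) \<Rightarrow> real \<Rightarrow> real" where
  "g0 \<rho> p r = (mass \<rho> r + 4 * pi * p r * r^3) / (r^2 * (1 - 2 * mass \<rho> r / r))"

definition I0 :: "(real \<Rightarrow> real) \<Rightarrow> (real \<Rightarrow> real) \<Rightarrow> real \<Rightarrow> real" where
  "I0 \<rho> p r = integral {0..r} (g0 \<rho> p)"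

definition Dfun :: "(real \<Rightarrow> real) \<Rightarrow> (real \<Rightarrow> real) \<Rightarrow> real \<Rightarrow> real \<Rightarrow> real" where
  "Dfun \<rho> p dpc r = 1 + 4 * pi * dpc *
     integral {0..r} (\<lambda>s. s * exp (-2 * I0 \<rho> p s) / sqrt (1 - 2 * mass \<rho> s / s))"

definition delta_p :: "(real \<Rightarrow> real) \<Rightarrow> (real \<Rightarrow> real) \<Rightarrow> real \<Rightarrow> real \<Rightarrow> real" where
  "delta_p \<rho> p dpc r = dpc * sqrt (1 - 2 * mass \<rho> r / r) * exp (-2 * I0 \<rho> p r) / Dfun \<rho> p dpc r"

definition deformed_pressure :: "(real \<Rightarrow> real) \<Rightarrow> (real \<Rightarrow> real) \<Rightarrow> real \<Rightarrow> real \<Rightarrow> real" where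
  "deformed_pressure \<rho> p dpc r = p r + delta_p \<rho> p dpc r"

end

theory Submission
  imports Defs
begin

lemma indef_eq:
  fixes f :: "real \<Rightarrow> real"
  assumes "continuous_on {a..b} f" "0 \<le> a" "f integrable_on {0..a}" "r \<in> {a..b}"
  shows "integral {0..r} f = integral {0..a} f + integral {a..r} f"
proof -
  have "f integrable_on {a..r}"
    using assms integrable_continuous_interval integrable_on_subinterval[of f "{a..b}" a r] by auto
  then have "f integrable_on {0..r}"
    using assms Henstock_Kurzweil_Integration.integrable_combine[of 0 a r f] by auto
  then show ?thesis
    using assms Henstock_Kurzweil_Integration.integral_combine[of 0 a r f] by auto
qed

lemma indef_cont:
  fixes f :: "real \<Rightarrow> real"
  assumes "continuous_on {a..b} f" "0 \<le> a"
  shows "continuous_on {a..b} (\<lambda>r. integral {0..r} f)"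
proof (cases "f integrable_on {0..a}")
  case True
  have ab: "f integrable_on {a..b}" using assms(1) integrable_continuous_interval by blast
  have "continuous_on {a..b} (\<lambda>r. integral {0..a} f + integral {a..r} f)"
    by (intro continuous_intros indefinite_integral_continuous_1 ab)
  then show ?thesis
    by (rule continuous_on_eq) (rule indef_eq[OF assms True, symmetric])
next
  case False
  have z: "integral {0..r} f = 0" if "r \<in> {a..b}" for r
  proof -
    have "\<not> f integrable_on {0..r}"
      using False that integrable_on_subinterval[of f "{0..r}" 0 a] by auto
    then show ?thesis by (rule not_integrable_integral)
  qed
  show ?thesis
    by (rule continuous_on_eq[OF continuous_on_const[of _ 0]]) (simp add: z)
qed

lemma indef_deriv:
  fixes f :: "real \<Rightarrow> real"
  assumes "continuous_on {a..b} f" "0 \<le> a" "a < x" "x < b" "f integrable_on {0..a}"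
  shows "((\<lambda>r. integral {0..r} f) has_real_derivative f x) (at x)"
proof -
  have "((\<lambda>u. integral {a..u} f) has_vector_derivative f x) (at x within {a..b})"
    using assms by (intro integral_has_vector_derivative) auto
  moreover have "at x within {a..b} = at x"
    using assms by (intro at_within_interior) auto
  ultimately have "((\<lambda>u. integral {a..u} f) has_real_derivative f x) (at x)"
    by (simp add: has_real_derivative_iff_has_vector_derivative)
  then have "((\<lambda>u. integral {0..a} f + integral {a..u} f) has_real_derivative f x) (at x)"
    using DERIV_add[OF DERIV_const[of "integral {0..a} f" "at x"]] by simp
  then show ?thesis
    by (rule has_field_derivative_transform_within_open[where S="{a<..<b}"])
       (use assms in \<open>auto intro: indef_eq[OF assms(1,2,5), symmetric]\<close>)
qed

lemma alg1:
  fixes G h A D x rs :: real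
  assumes "G \<noteq> 0" "h \<noteq> 0" "D \<noteq> 0" "G * (x - rs) = - (h * A / D)"
  shows "- (A / D) / G = (x - rs) / (h - 0)"
proof -
  have "x - rs = (G * (x - rs)) / G" using assms(1) by simp
  also have "\<dots> = - (h * A / D) / G" using assms(4) by simp
  also have "\<dots> = - (h * (A / D / G))" by simp
  finally have "(x - rs) / (h - 0) = - (h * (A / D / G)) / h" by simp
  also have "\<dots> = - (A / D / G)" using assms(2) by simp
  finally show ?thesis by simp
qed

theorem mainTheorem3:
  fixes \<rho>0 p0 :: "real \<Rightarrow> real" and R rs :: real
  assumes tov: "tov_solution \<rho>0 p0 R"
    and reg: "regular_centre \<rho>0 p0"
    and rho_cont: "continuous_on {0<..<R} \<rho>0"
    and rs_pos: "0 < rs" and rs_lt: "rs < R"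
    and p_zero: "p0 rs = 0"
    and M_pos: "mass \<rho>0 rs > 0"
    and rho_pos: "\<rho>0 rs > 0"
  shows "(\<exists>rsf. rsf 0 = rs \<and> continuous (at 0) rsf \<and>
            (\<forall>\<^sub>F dpc in nhds 0. rsf dpc \<in> {0<..<R} \<and> deformed_pressure \<rho>0 p0 dpc (rsf dpc) = 0))
       \<and> (\<forall>rsf. rsf 0 = rs \<and> continuous (at 0) rsf \<and>
            (\<forall>\<^sub>F dpc in nhds 0. rsf dpc \<in> {0<..<R} \<and> deformed_pressure \<rho>0 p0 dpc (rsf dpc) = 0)
          \<longrightarrow> (rsf has_real_derivative
                 (rs^2 * (1 - 2 * mass \<rho>0 rs / rs) powr (3/2) * exp (-2 * I0 \<rho>0 p0 rs)
                   / (\<rho>0 rs * mass \<rho>0 rs))) (at 0)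
            \<and> ((\<lambda>dpc. 2 * mass \<rho>0 (rsf dpc) / rsf dpc) has_real_derivative
                 (8 * pi / 3 * (3 * \<rho>0 rs - mass \<rho>0 rs / (4 * pi / 3 * rs^3)) * rs *
                  (rs^2 * (1 - 2 * mass \<rho>0 rs / rs) powr (3/2) * exp (-2 * I0 \<rho>0 p0 rs)
                   / (\<rho>0 rs * mass \<rho>0 rs)))) (at 0))
       \<and> rs^2 * (1 - 2 * mass \<rho>0 rs / rs) powr (3/2) * exp (-2 * I0 \<rho>0 p0 rs)
           / (\<rho>0 rs * mass \<rho>0 rs) > 0"
proof -
  define M where "M = mass \<rho>0 rs"
  have posR: "1 - 2 * mass \<rho>0 r / r > 0" if "r \<in> {0<..<R}" for r
    using tov that unfolding tov_solution_def by blast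
  have dp: "(p0 has_real_derivative tov_rhs \<rho>0 p0 r) (at r)" if "r \<in> {0<..<R}" for r
    using tov that unfolding tov_solution_def by blast
  define x0 where "x0 = 1 - 2 * M / rs"
  have x0pos: "x0 > 0" using posR[of rs] rs_pos rs_lt by (simp add: x0_def M_def)
  define P where "P = tov_rhs \<rho>0 p0 rs"
  have Peq: "P = - (\<rho>0 rs * M) / (rs^2 * x0)"
    by (simp add: P_def tov_rhs_def p_zero M_def x0_def)
  have Pneg: "P < 0" unfolding Peq using rho_pos M_pos x0pos rs_pos
    by (simp add: M_def divide_neg_pos)
  have dprs: "(p0 has_real_derivative P) (at rs)" using dp[of rs] rs_pos rs_lt by (simp add: P_def)
  obtain d1 where d1: "d1 > 0" "\<And>h. h > 0 \<Longrightarrow> h < d1 \<Longrightarrow> p0 rs < p0 (rs - h)"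
    using DERIV_neg_dec_left[OF dprs Pneg] by blast
  obtain d2 where d2: "d2 > 0" "\<And>h. h > 0 \<Longrightarrow> h < d2 \<Longrightarrow> p0 rs > p0 (rs + h)"
    using DERIV_neg_dec_right[OF dprs Pneg] by blast
  define \<eta> where "\<eta> = min (min d1 d2 / 2) (min (rs/2) ((R - rs)/2))"
  have eta_pos: "\<eta> > 0" using d1 d2 rs_pos rs_lt by (simp add: \<eta>_def)
  define a where "a = rs - \<eta>"
  define b where "b = rs + \<eta>"
  have eta_le: "\<eta> \<le> rs/2" "\<eta> \<le> (R - rs)/2" "\<eta> \<le> d1/2" "\<eta> \<le> d2/2"
    unfolding \<eta>_def by linarith+
  have a_pos: "a > 0" and b_lt: "b < R" and a_lt: "a < rs" and b_gt: "rs < b"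
    using eta_pos eta_le rs_pos rs_lt by (auto simp: a_def b_def)
  have sub: "{a..b} \<subseteq> {0<..<R}" using a_pos b_lt by auto
  have pleft: "p0 (rs - e) > 0" if "0 < e" "e \<le> \<eta>" for e
    using d1(2)[of e] that eta_le d1 p_zero by simp
  have pright: "p0 (rs + e) < 0" if "0 < e" "e \<le> \<eta>" for e
    using d2(2)[of e] that eta_le d2 p_zero by simp
  have posab: "1 - 2 * mass \<rho>0 r / r > 0" if "r \<in> {a..b}" for r
    using posR sub that by blast
  have cp: "continuous_on {a..b} p0"
    using dp sub by (intro continuous_at_imp_continuous_on) (meson DERIV_isCont subsetD)
  have crho: "continuous_on {a..b} (\<lambda>s. \<rho>0 s * s^2)"
    using continuous_on_subset[OF rho_cont sub] by (intro continuous_intros)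
  have mass_eq: "mass \<rho>0 = (\<lambda>r. 4 * pi * integral {0..r} (\<lambda>s. \<rho>0 s * s^2))"
    by (simp add: fun_eq_iff mass_def)
  have cm: "continuous_on {a..b} (mass \<rho>0)"
    unfolding mass_eq using indef_cont[OF crho] a_pos by (intro continuous_intros) auto
  have nz: "r^2 * (1 - 2 * mass \<rho>0 r / r) \<noteq> 0" if "r \<in> {a..b}" for r
    using posab[OF that] a_pos that by simp
  have cg: "continuous_on {a..b} (g0 \<rho>0 p0)"
    unfolding g0_def using nz a_pos
    by (intro continuous_intros cm cp) (auto simp del: mult_eq_0_iff)
  have I0_eq: "I0 \<rho>0 p0 = (\<lambda>r. integral {0..r} (g0 \<rho>0 p0))"
    by (simp add: fun_eq_iff I0_def)
  have cI: "continuous_on {a..b} (I0 \<rho>0 p0)"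
    unfolding I0_eq using indef_cont[OF cg] a_pos by auto
  define Af where "Af r = sqrt (1 - 2 * mass \<rho>0 r / r) * exp (-2 * I0 \<rho>0 p0 r)" for r
  define Jf where "Jf r = integral {0..r} (\<lambda>s. s * exp (-2 * I0 \<rho>0 p0 s) / sqrt (1 - 2 * mass \<rho>0 s / s))" for r
  have cA: "continuous_on {a..b} Af"
    unfolding Af_def using a_pos by (intro continuous_intros cm cI) auto
  have cJi: "continuous_on {a..b} (\<lambda>s. s * exp (-2 * I0 \<rho>0 p0 s) / sqrt (1 - 2 * mass \<rho>0 s / s))"
  proof -
    have sq: "\<forall>s\<in>{a..b}. sqrt (1 - 2 * mass \<rho>0 s / s) \<noteq> 0"
      using posab by (metis less_irrefl real_sqrt_gt_zero)
    have nz0: "\<forall>s\<in>{a..b}. s \<noteq> 0" using a_pos by auto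
    show ?thesis by (intro continuous_intros cm cI sq nz0)
  qed
  have cJ: "continuous_on {a..b} Jf"
    unfolding Jf_def using indef_cont[OF cJi] a_pos by auto
  have intab: "interior {a..b} = {a<..<b}" by simp
  have isA: "isCont Af rs" using continuous_on_interior[OF cA] a_lt b_gt by simp
  have isJ: "isCont Jf rs" using continuous_on_interior[OF cJ] a_lt b_gt by simp
  have rho_int: "(\<lambda>s. \<rho>0 s * s^2) integrable_on {0..a}"
  proof -
    have "integral {0..rs} (\<lambda>s. \<rho>0 s * s^2) \<noteq> 0" using M_pos by (auto simp add: mass_def)
    then have "(\<lambda>s. \<rho>0 s * s^2) integrable_on {0..rs}" using not_integrable_integral by blast
    then show ?thesis by (rule integrable_on_subinterval) (use a_lt in auto)
  qed
  have dmass: "(mass \<rho>0 has_real_derivative 4 * pi * (\<rho>0 rs * rs^2)) (at rs)"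
    unfolding mass_eq
    by (intro DERIV_cmult indef_deriv[OF crho _ a_lt b_gt rho_int]) (use a_pos in simp)
  obtain B where B: "B > 0" "\<And>r. r \<in> {a..b} \<Longrightarrow> \<bar>Jf r\<bar> \<le> B"
  proof -
    have "bounded (Jf ` {a..b})"
      by (intro compact_imp_bounded compact_continuous_image cJ) simp
    then show ?thesis using that unfolding bounded_pos by auto
  qed
  define \<delta> where "\<delta> = 1 / (8 * pi * B)"
  have delta_pos: "\<delta> > 0" using B by (simp add: \<delta>_def)
  have Dpos: "1 + 4 * pi * h * Jf r > 0" if "\<bar>h\<bar> < \<delta>" "r \<in> {a..b}" for h r
  proof -
    have "\<bar>4 * pi * h * Jf r\<bar> = 4 * pi * \<bar>h\<bar> * \<bar>Jf r\<bar>" by (simp add: abs_mult)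
    also have "\<dots> \<le> 4 * pi * \<bar>h\<bar> * B" using B(2)[OF that(2)] by (simp add: mult_left_mono)
    also have "\<dots> \<le> 4 * pi * \<delta> * B" using that(1) B by (simp add: mult_right_mono)
    also have "\<dots> = 1/2" using B by (simp add: \<delta>_def)
    finally show ?thesis by linarith
  qed
  define F where "F h r = p0 r + h * Af r / (1 + 4 * pi * h * Jf r)" for h r
  have Feq: "deformed_pressure \<rho>0 p0 h r = F h r" for h r
    by (simp add: F_def deformed_pressure_def delta_p_def Dfun_def Af_def Jf_def mult.assoc)
  have cF: "continuous_on {a..b} (F h)" if "\<bar>h\<bar> < \<delta>" for h
  proof -
    have "\<forall>r\<in>{a..b}. 1 + 4 * pi * h * Jf r \<noteq> 0" using Dpos[OF that] by (metis less_irrefl)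
    then show ?thesis unfolding F_def by (intro continuous_intros cp cA cJ)
  qed
  define Z where "Z h = {r \<in> {a..b}. F h r = 0}" for h
  have minex: "\<exists>r. r \<in> Z h \<and> (\<forall>z\<in>Z h. \<bar>r - rs\<bar> \<le> \<bar>z - rs\<bar>)" if "\<bar>h\<bar> < \<delta>" "Z h \<noteq> {}" for h
  proof -
    have "closed (Z h)" unfolding Z_def
      by (intro continuous_closed_preimage_constant cF that) simp
    moreover have "bounded (Z h)" by (rule bounded_subset[OF bounded_closed_interval]) (auto simp: Z_def)
    ultimately have "compact (Z h)" by (simp add: compact_eq_bounded_closed)
    moreover have "continuous_on (Z h) (\<lambda>r. \<bar>r - rs\<bar>)" by (intro continuous_intros)
    ultimately show ?thesis using continuous_attains_inf[OF _ that(2), of "\<lambda>r. \<bar>r - rs\<bar>"] by blast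
  qed
  define rsf0 where "rsf0 h = (SOME r. r \<in> Z h \<and> (\<forall>z\<in>Z h. \<bar>r - rs\<bar> \<le> \<bar>z - rs\<bar>))" for h
  have spec: "rsf0 h \<in> Z h \<and> (\<forall>z\<in>Z h. \<bar>rsf0 h - rs\<bar> \<le> \<bar>z - rs\<bar>)" if "\<bar>h\<bar> < \<delta>" "Z h \<noteq> {}" for h
    unfolding rsf0_def by (rule someI_ex[OF minex[OF that]])
  have Fcont: "isCont (\<lambda>h. F h r) 0" for r
    unfolding F_def by (intro continuous_intros) simp
  have K: "\<forall>\<^sub>F h in nhds 0. \<bar>h\<bar> < \<delta> \<and> F h (rs - e) > 0 \<and> F h (rs + e) < 0" if "0 < e" "e \<le> \<eta>" for e
  proof -
    have t1: "((\<lambda>h. F h r) \<longlongrightarrow> p0 r) (nhds 0)" for r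
    proof -
      have "((\<lambda>h. F h r) \<longlongrightarrow> F 0 r) (nhds 0)"
        using Fcont[of r] tendsto_at_iff_tendsto_nhds[of "\<lambda>h. F h r" 0] unfolding isCont_def by blast
      then show ?thesis by (simp add: F_def)
    qed
    have t2: "((\<lambda>h::real. \<bar>h\<bar>) \<longlongrightarrow> 0) (nhds 0)"
    proof -
      have "isCont (\<lambda>h::real. \<bar>h\<bar>) 0" by (intro continuous_intros)
      then show ?thesis using tendsto_at_iff_tendsto_nhds[of "\<lambda>h::real. \<bar>h\<bar>" 0] unfolding isCont_def by simp
    qed
    show ?thesis
      using order_tendstoD(2)[OF t2 delta_pos] order_tendstoD(1)[OF t1 pleft[OF that]]
        order_tendstoD(2)[OF t1 pright[OF that]]
      by eventually_elim auto
  qed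
  have Kz: "\<exists>z\<in>Z h. \<bar>z - rs\<bar> \<le> e" if "0 < e" "e \<le> \<eta>" "\<bar>h\<bar> < \<delta>" "F h (rs - e) > 0" "F h (rs + e) < 0" for e h
  proof -
    have "continuous_on {rs - e..rs + e} (F h)"
      by (rule continuous_on_subset[OF cF[OF that(3)]]) (use that in \<open>auto simp: a_def b_def\<close>)
    then have "\<exists>x\<ge>rs - e. x \<le> rs + e \<and> F h x = 0"
      by (intro IVT2') (use that in auto)
    then obtain z where z: "rs - e \<le> z" "z \<le> rs + e" "F h z = 0" by blast
    then have "z \<in> Z h" using that by (auto simp: Z_def a_def b_def)
    moreover have "\<bar>z - rs\<bar> \<le> e" using z by linarith
    ultimately show ?thesis by blast
  qed
  have Kr: "\<forall>\<^sub>F h in nhds 0. \<bar>h\<bar> < \<delta> \<and> rsf0 h \<in> Z h \<and> \<bar>rsf0 h - rs\<bar> \<le> e" if e0: "0 < e" "e \<le> \<eta>" for e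
    using K[OF e0]
  proof eventually_elim
    case (elim h)
    then obtain z where "z \<in> Z h" "\<bar>z - rs\<bar> \<le> e" using Kz[OF e0] by blast
    then have ne: "Z h \<noteq> {}" by blast
    from elim have hd: "\<bar>h\<bar> < \<delta>" by blast
    have sp: "rsf0 h \<in> Z h" "\<forall>z\<in>Z h. \<bar>rsf0 h - rs\<bar> \<le> \<bar>z - rs\<bar>" using spec[OF hd ne] by blast+
    have "\<bar>rsf0 h - rs\<bar> \<le> \<bar>z - rs\<bar>" using sp(2) \<open>z \<in> Z h\<close> by blast
    then have "rsf0 h \<in> Z h" "\<bar>rsf0 h - rs\<bar> \<le> e" using sp(1) \<open>\<bar>z - rs\<bar> \<le> e\<close> by linarith+
    then show ?case using hd by blast
  qed
  have at_le_nhds: "at (0::real) \<le> nhds 0" by (simp add: at_within_def)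
  have ex_part: "\<exists>rsf. rsf 0 = rs \<and> continuous (at 0) rsf \<and>
            (\<forall>\<^sub>F dpc in nhds 0. rsf dpc \<in> {0<..<R} \<and> deformed_pressure \<rho>0 p0 dpc (rsf dpc) = 0)"
  proof (intro exI conjI)
    have "rs \<in> Z 0" using a_lt b_gt by (simp add: Z_def F_def p_zero)
    then have ne: "Z 0 \<noteq> {}" by blast
    have "\<forall>z\<in>Z 0. \<bar>rsf0 0 - rs\<bar> \<le> \<bar>z - rs\<bar>" using spec[OF _ ne] delta_pos by simp
    then have "\<bar>rsf0 0 - rs\<bar> \<le> \<bar>rs - rs\<bar>" using \<open>rs \<in> Z 0\<close> by blast
    then show r0: "rsf0 0 = rs" by simp
    show "continuous (at 0) rsf0"
      unfolding continuous_at r0 tendsto_iff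
    proof (intro allI impI)
      fix e :: real assume "e > 0"
      then have "\<forall>\<^sub>F h in nhds 0. \<bar>h\<bar> < \<delta> \<and> rsf0 h \<in> Z h \<and> \<bar>rsf0 h - rs\<bar> \<le> min (e/2) \<eta>"
        using Kr[of "min (e/2) \<eta>"] eta_pos by auto
      then have "\<forall>\<^sub>F h in at 0. \<bar>h\<bar> < \<delta> \<and> rsf0 h \<in> Z h \<and> \<bar>rsf0 h - rs\<bar> \<le> min (e/2) \<eta>"
        by (rule filter_leD[OF at_le_nhds])
      then show "\<forall>\<^sub>F h in at 0. dist (rsf0 h) rs < e"
        by eventually_elim (use \<open>e > 0\<close> in \<open>auto simp: dist_real_def\<close>)
    qed
    show "\<forall>\<^sub>F dpc in nhds 0. rsf0 dpc \<in> {0<..<R} \<and> deformed_pressure \<rho>0 p0 dpc (rsf0 dpc) = 0"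
      using Kr[OF eta_pos order.refl]
      by eventually_elim (use sub in \<open>auto simp: Z_def Feq\<close>)
  qed
  define Dv where "Dv = rs^2 * (1 - 2 * mass \<rho>0 rs / rs) powr (3/2) * exp (-2 * I0 \<rho>0 p0 rs)
                   / (\<rho>0 rs * mass \<rho>0 rs)"
  have x0p: "x0 powr (3/2) = x0 * sqrt x0"
  proof -
    have "x0 powr (3/2) = x0 powr (1 + 1/2)" by simp
    also have "\<dots> = x0 powr 1 * x0 powr (1/2)" by (rule powr_add)
    also have "\<dots> = x0 * x0 powr (1/2)" using x0pos by simp
    finally show ?thesis using x0pos by (simp add: powr_half_sqrt)
  qed
  have Dv_eq: "Dv = - (Af rs / 1) / P"
    unfolding Dv_def Peq Af_def using x0pos rho_pos M_pos rs_pos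
    by (simp add: x0p flip: M_def x0_def)
  have Dv_pos: "Dv > 0"
    unfolding Dv_def using x0pos rho_pos M_pos rs_pos by (simp flip: M_def x0_def)
  have deriv_part: "(rsf has_real_derivative Dv) (at 0) \<and>
       ((\<lambda>dpc. 2 * mass \<rho>0 (rsf dpc) / rsf dpc) has_real_derivative
                 (8 * pi / 3 * (3 * \<rho>0 rs - mass \<rho>0 rs / (4 * pi / 3 * rs^3)) * rs * Dv)) (at 0)"
    if r0: "rsf 0 = rs" and rc: "continuous (at 0) rsf"
      and rev: "\<forall>\<^sub>F dpc in nhds 0. rsf dpc \<in> {0<..<R} \<and> deformed_pressure \<rho>0 p0 dpc (rsf dpc) = 0"
    for rsf
  proof -
    have rt: "(rsf \<longlongrightarrow> rs) (at 0)" using rc r0 by (simp add: continuous_at)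
    obtain g where g: "\<And>z. p0 z - p0 rs = g z * (z - rs)" "isCont g rs" "g rs = P"
      using CARAT_DERIV[THEN iffD1, OF dprs] by blast
    have gt: "((\<lambda>h. g (rsf h)) \<longlongrightarrow> P) (at 0)"
      using isCont_tendsto_compose[OF g(2) rt] g(3) by simp
    have At: "((\<lambda>h. Af (rsf h)) \<longlongrightarrow> Af rs) (at 0)"
      using isCont_tendsto_compose[OF isA rt] .
    have Jt: "((\<lambda>h. Jf (rsf h)) \<longlongrightarrow> Jf rs) (at 0)"
      using isCont_tendsto_compose[OF isJ rt] .
    have Dt: "((\<lambda>h. 1 + 4 * pi * h * Jf (rsf h)) \<longlongrightarrow> 1) (at 0)"
      using tendsto_add[OF tendsto_const[of 1] tendsto_mult[OF tendsto_mult[OF tendsto_const[of "4*pi"] tendsto_ident_at[of 0 UNIV]] Jt]]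
      by simp
    have Lt: "((\<lambda>h. - (Af (rsf h) / (1 + 4 * pi * h * Jf (rsf h))) / g (rsf h)) \<longlongrightarrow> Dv) (at 0)"
      unfolding Dv_eq using Pneg by (intro tendsto_intros At Dt gt) auto
    have nz0: "eventually (\<lambda>h::real. h \<noteq> 0) (at 0)" by (simp add: eventually_at_filter)
    have ev: "\<forall>\<^sub>F h in at 0. h \<noteq> 0 \<and> F h (rsf h) = 0 \<and> g (rsf h) < 0 \<and> 1 + 4 * pi * h * Jf (rsf h) > 0"
      using filter_leD[OF at_le_nhds rev] order_tendstoD(2)[OF gt Pneg]
        order_tendstoD(1)[OF Dt zero_less_one] nz0
      by eventually_elim (auto simp: Feq)
    have "((\<lambda>h. (rsf h - rsf 0) / (h - 0)) \<longlongrightarrow> Dv) (at 0)"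
    proof (rule Lim_transform_eventually[OF Lt])
      show "\<forall>\<^sub>F h in at 0. - (Af (rsf h) / (1 + 4 * pi * h * Jf (rsf h))) / g (rsf h) = (rsf h - rsf 0) / (h - 0)"
        using ev
      proof eventually_elim
        case (elim h)
        have "g (rsf h) * (rsf h - rs) = - (h * Af (rsf h) / (1 + 4 * pi * h * Jf (rsf h)))"
          using g(1)[of "rsf h"] elim p_zero by (simp add: F_def)
        then show ?case using elim r0 by (intro alg1) auto
      qed
    qed
    then have dr: "(rsf has_real_derivative Dv) (at 0)"
      by (simp add: has_field_derivative_iff)
    have dm: "((\<lambda>h. mass \<rho>0 (rsf h)) has_real_derivative (4 * pi * (\<rho>0 rs * rs^2)) * Dv) (at 0)"
      using DERIV_chain2[OF dmass[folded r0] dr] by (simp add: r0)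
    have dchi: "((\<lambda>h. 2 * mass \<rho>0 (rsf h) / rsf h) has_real_derivative
        ((2 * ((4 * pi * (\<rho>0 rs * rs^2)) * Dv)) * rsf 0 - 2 * mass \<rho>0 (rsf 0) * Dv) / (rsf 0 * rsf 0)) (at 0)"
      using DERIV_divide[OF DERIV_cmult[OF dm, of 2] dr] r0 rs_pos by simp
    have eqv: "((2 * ((4 * pi * (\<rho>0 rs * rs^2)) * Dv)) * rsf 0 - 2 * mass \<rho>0 (rsf 0) * Dv) / (rsf 0 * rsf 0)
        = 8 * pi / 3 * (3 * \<rho>0 rs - mass \<rho>0 rs / (4 * pi / 3 * rs^3)) * rs * Dv"
      using r0 rs_pos by (simp add: field_simps power2_eq_square power3_eq_cube)
    show ?thesis using dr dchi[unfolded eqv] by (rule conjI)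
  qed
  show ?thesis
    unfolding Dv_def[symmetric]
  proof (intro conjI allI impI)
    show "\<exists>rsf. rsf 0 = rs \<and> continuous (at 0) rsf \<and>
            (\<forall>\<^sub>F dpc in nhds 0. rsf dpc \<in> {0<..<R} \<and> deformed_pressure \<rho>0 p0 dpc (rsf dpc) = 0)"
      by (rule ex_part)
    show "0 < Dv" by (rule Dv_pos)
  next
    fix rsf assume "rsf 0 = rs \<and> continuous (at 0) rsf \<and>
            (\<forall>\<^sub>F dpc in nhds 0. rsf dpc \<in> {0<..<R} \<and> deformed_pressure \<rho>0 p0 dpc (rsf dpc) = 0)"
    then show "(rsf has_real_derivative Dv) (at 0)"
      "((\<lambda>dpc. 2 * mass \<rho>0 (rsf dpc) / rsf dpc) has_real_derivative
                 (8 * pi / 3 * (3 * \<rho>0 rs - mass \<rho>0 rs / (4 * pi / 3 * rs^3)) * rs * Dv)) (at 0)"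
      using deriv_part by blast+
  qed
qed

end
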